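(* Let $M$ be a complete pointed metric space and let $\varphi_1,\dots,\varphi_n$ be non-negative Lipschitz functions on $M$ with bounded support such that $\varphi_1+\cdots+\varphi_n=1$ on $M$. Suppose $A_1,\dots,A_n$ are subsets of $M$ each containing the base point, with $\mathrm{supp}(\varphi_k)\subset A_k$ for all $k$. Then $\mathcal{F}(M)$ is isomorphic to a complemented subspace of $\mathcal{F}(A_1)\oplus\cdots\oplus\mathcal{F}(A_n)$.
   Context: For a pointed metric space $(M,d)$ with base point $0$, ${\mathrm{Lip}}_0(M)$ is the Banach space of Lipschitz $f:M\to\mathbb{R}$ with $f(0)=0$, normed by the Lipschitz constant. The Lipschitz-free space $\mathcal{F}(M)$ is the closed linear span in ${\mathrm{Lip}}_0(M)^*$ of the evaluation functionals $\delta(x)$, $x\in M$. For a subset $A\subseteq M$ containing the base point, $\mathcal{F}(A)$ (with the restricted metric) is identified isometrically with the closed linear span of $\delta(A)$ in $\mathcal{F}(M)$. The direct sum is any finite direct sum of Banach spaces (all such norms are equivalent). *)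

theory Defs
  imports "HOL-Analysis.Analysis"
begin

text \<open>Pointed metric space: carrier M, metric d, base point p (all explicit).
  Lipschitz functions are represented as functions on the ambient type,
  normalised to vanish outside M.\<close>

definition lip_on :: "'a set \<Rightarrow> ('a \<Rightarrow> 'a \<Rightarrow> real) \<Rightarrow> real \<Rightarrow> ('a \<Rightarrow> real) \<Rightarrow> bool" where
  "lip_on M d L f \<longleftrightarrow> L \<ge> 0 \<and> (\<forall>x\<in>M. \<forall>y\<in>M. \<bar>f x - f y\<bar> \<le> L * d x y)"

definition lipnorm :: "'a set \<Rightarrow> ('a \<Rightarrow> 'a \<Rightarrow> real) \<Rightarrow> ('a \<Rightarrow> real) \<Rightarrow> real" where
  "lipnorm M d f = Inf {L. lip_on M d L f}"

definition Lip0 :: "'a set \<Rightarrow> ('a \<Rightarrow> 'a \<Rightarrow> real) \<Rightarrow> 'a \<Rightarrow> ('a \<Rightarrow> real) set" where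
  "Lip0 M d p = {f. (\<exists>L. lip_on M d L f) \<and> f p = 0 \<and> (\<forall>x. x \<notin> M \<longrightarrow> f x = 0)}"

definition Lip0_dual :: "'a set \<Rightarrow> ('a \<Rightarrow> 'a \<Rightarrow> real) \<Rightarrow> 'a \<Rightarrow> (('a \<Rightarrow> real) \<Rightarrow> real) set" where
  "Lip0_dual M d p = {\<phi>.
     (\<forall>f\<in>Lip0 M d p. \<forall>g\<in>Lip0 M d p. \<phi> (\<lambda>x. f x + g x) = \<phi> f + \<phi> g) \<and>
     (\<forall>f\<in>Lip0 M d p. \<forall>c. \<phi> (\<lambda>x. c * f x) = c * \<phi> f) \<and>
     (\<exists>C. \<forall>f\<in>Lip0 M d p. \<bar>\<phi> f\<bar> \<le> C * lipnorm M d f) \<and>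
     (\<forall>f. f \<notin> Lip0 M d p \<longrightarrow> \<phi> f = 0)}"

definition dual_norm :: "'a set \<Rightarrow> ('a \<Rightarrow> 'a \<Rightarrow> real) \<Rightarrow> 'a \<Rightarrow> (('a \<Rightarrow> real) \<Rightarrow> real) \<Rightarrow> real" where
  "dual_norm M d p \<phi> = Sup {\<bar>\<phi> f\<bar> | f. f \<in> Lip0 M d p \<and> lipnorm M d f \<le> 1}"

definition delta :: "'a set \<Rightarrow> ('a \<Rightarrow> 'a \<Rightarrow> real) \<Rightarrow> 'a \<Rightarrow> 'a \<Rightarrow> (('a \<Rightarrow> real) \<Rightarrow> real)" where
  "delta M d p x = (\<lambda>f. if f \<in> Lip0 M d p then f x else 0)"

text \<open>Free M d p A: the closed linear span of delta(A) in Lip_0(M)^*.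
  For A = M this is F(M); for p \<in> A \<subseteq> M it is the standard isometric copy of F(A)
  inside F(M).\<close>
definition Free :: "'a set \<Rightarrow> ('a \<Rightarrow> 'a \<Rightarrow> real) \<Rightarrow> 'a \<Rightarrow> 'a set \<Rightarrow> (('a \<Rightarrow> real) \<Rightarrow> real) set" where
  "Free M d p A = {\<phi> \<in> Lip0_dual M d p. \<forall>\<epsilon>>0. \<exists>F c. finite F \<and> F \<subseteq> A \<and>
      dual_norm M d p (\<lambda>f. \<phi> f - (\<Sum>x\<in>F. c x * delta M d p x f)) < \<epsilon>}"

definition DSum :: "'a set \<Rightarrow> ('a \<Rightarrow> 'a \<Rightarrow> real) \<Rightarrow> 'a \<Rightarrow> nat \<Rightarrow> (nat \<Rightarrow> 'a set)
    \<Rightarrow> (nat \<Rightarrow> (('a \<Rightarrow> real) \<Rightarrow> real)) set" where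
  "DSum M d p n A = {\<mu>. (\<forall>k<n. \<mu> k \<in> Free M d p (A k)) \<and> (\<forall>k\<ge>n. \<mu> k = (\<lambda>f. 0))}"

definition dsum_norm :: "'a set \<Rightarrow> ('a \<Rightarrow> 'a \<Rightarrow> real) \<Rightarrow> 'a \<Rightarrow> nat
    \<Rightarrow> (nat \<Rightarrow> (('a \<Rightarrow> real) \<Rightarrow> real)) \<Rightarrow> real" where
  "dsum_norm M d p n \<mu> = (\<Sum>k<n. dual_norm M d p (\<mu> k))"

definition fadd :: "('b \<Rightarrow> real) \<Rightarrow> ('b \<Rightarrow> real) \<Rightarrow> ('b \<Rightarrow> real)" where
  "fadd \<phi> \<psi> = (\<lambda>f. \<phi> f + \<psi> f)"
definition fscale :: "real \<Rightarrow> ('b \<Rightarrow> real) \<Rightarrow> ('b \<Rightarrow> real)" where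
  "fscale c \<phi> = (\<lambda>f. c * \<phi> f)"
definition sadd :: "(nat \<Rightarrow> 'b \<Rightarrow> real) \<Rightarrow> (nat \<Rightarrow> 'b \<Rightarrow> real) \<Rightarrow> (nat \<Rightarrow> 'b \<Rightarrow> real)" where
  "sadd \<mu> \<nu> = (\<lambda>k. fadd (\<mu> k) (\<nu> k))"
definition sscale :: "real \<Rightarrow> (nat \<Rightarrow> 'b \<Rightarrow> real) \<Rightarrow> (nat \<Rightarrow> 'b \<Rightarrow> real)" where
  "sscale c \<mu> = (\<lambda>k. fscale c (\<mu> k))"

definition bounded_linear_between ::
  "'x set \<Rightarrow> ('x \<Rightarrow> 'x \<Rightarrow> 'x) \<Rightarrow> (real \<Rightarrow> 'x \<Rightarrow> 'x) \<Rightarrow> ('x \<Rightarrow> real) \<Rightarrow>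
   'y set \<Rightarrow> ('y \<Rightarrow> 'y \<Rightarrow> 'y) \<Rightarrow> (real \<Rightarrow> 'y \<Rightarrow> 'y) \<Rightarrow> ('y \<Rightarrow> real) \<Rightarrow> ('x \<Rightarrow> 'y) \<Rightarrow> bool" where
  "bounded_linear_between X addX scX nX Y addY scY nY T \<longleftrightarrow>
     T ` X \<subseteq> Y \<and>
     (\<forall>x\<in>X. \<forall>y\<in>X. T (addX x y) = addY (T x) (T y)) \<and>
     (\<forall>c. \<forall>x\<in>X. T (scX c x) = scY c (T x)) \<and>
     (\<exists>C. \<forall>x\<in>X. nY (T x) \<le> C * nX x)"

definition Free_iso_complemented_in_sum ::
  "'a set \<Rightarrow> ('a \<Rightarrow> 'a \<Rightarrow> real) \<Rightarrow> 'a \<Rightarrow> nat \<Rightarrow> (nat \<Rightarrow> 'a set) \<Rightarrow> bool" where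
  "Free_iso_complemented_in_sum M d p n A \<longleftrightarrow>
    (let X = Free M d p M; nX = dual_norm M d p;
         Y = DSum M d p n A; nY = dsum_norm M d p n in
     \<exists>Q T S.
       bounded_linear_between Y sadd sscale nY Y sadd sscale nY Q \<and>
       (\<forall>y\<in>Y. Q (Q y) = Q y) \<and>
       bounded_linear_between X fadd fscale nX (Q ` Y) sadd sscale nY T \<and>
       bounded_linear_between (Q ` Y) sadd sscale nY X fadd fscale nX S \<and>
       (\<forall>x\<in>X. S (T x) = x) \<and> (\<forall>z\<in>Q ` Y. T (S z) = z))"

end

theory Submission
  imports Defs
begin


locale pms =
  fixes M :: "'a set" and d :: "'a \<Rightarrow> 'a \<Rightarrow> real" and p :: 'a
  assumes ms: "Metric_space M d" and pM: "p \<in> M"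
begin

lemma dnn: "0 \<le> d x y" by (rule Metric_space.nonneg[OF ms])
lemma dcom: "d x y = d y x" by (rule Metric_space.commute[OF ms])
lemma dzero: "x \<in> M \<Longrightarrow> y \<in> M \<Longrightarrow> d x y = 0 \<longleftrightarrow> x = y" by (rule Metric_space.zero[OF ms])
lemma dtri: "x \<in> M \<Longrightarrow> y \<in> M \<Longrightarrow> z \<in> M \<Longrightarrow> d x z \<le> d x y + d y z"
  by (rule Metric_space.triangle[OF ms])

lemma lipnorm_nonneg: "f \<in> Lip0 M d p \<Longrightarrow> 0 \<le> lipnorm M d f"
  unfolding lipnorm_def Lip0_def
  by (rule cInf_greatest) (auto simp: lip_on_def)

lemma lip_lipnorm: assumes "f \<in> Lip0 M d p" shows "lip_on M d (lipnorm M d f) f"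
proof -
  have ne: "{L. lip_on M d L f} \<noteq> {}" using assms unfolding Lip0_def by auto
  have "\<bar>f x - f y\<bar> \<le> lipnorm M d f * d x y" if "x \<in> M" "y \<in> M" for x y
  proof (cases "d x y = 0")
    case True then show ?thesis using that dzero[of x y] by simp
  next
    case False
    then have pos: "d x y > 0" using dnn[of x y] by linarith
    have "\<bar>f x - f y\<bar> / d x y \<le> lipnorm M d f"
      unfolding lipnorm_def
    proof (rule cInf_greatest[OF ne])
      fix L assume "L \<in> {L. lip_on M d L f}"
      then have "\<bar>f x - f y\<bar> \<le> L * d x y" using that unfolding lip_on_def by auto
      then show "\<bar>f x - f y\<bar> / d x y \<le> L" using pos by (simp add: divide_le_eq)
    qed
    then show ?thesis using pos by (simp add: divide_le_eq)
  qed
  then show ?thesis using lipnorm_nonneg[OF assms] unfolding lip_on_def by auto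
qed

lemma lipnorm_le: assumes "lip_on M d L f" shows "lipnorm M d f \<le> L"
  unfolding lipnorm_def
  by (rule cInf_lower) (use assms in \<open>auto simp: bdd_below_def lip_on_def intro!: exI[of _ 0]\<close>)

lemma Lip0_bound: assumes "f \<in> Lip0 M d p" "x \<in> M" shows "\<bar>f x\<bar> \<le> lipnorm M d f * d p x"
proof -
  have "f p = 0" using assms unfolding Lip0_def by auto
  then show ?thesis using lip_lipnorm[OF assms(1)] assms(2) pM unfolding lip_on_def
    by (metis diff_zero dcom)
qed

lemma Lip0_add: assumes "f \<in> Lip0 M d p" "g \<in> Lip0 M d p" shows "(\<lambda>x. f x + g x) \<in> Lip0 M d p"
proof -
  obtain L1 L2 where "lip_on M d L1 f" "lip_on M d L2 g" using assms unfolding Lip0_def by auto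
  then have "lip_on M d (L1+L2) (\<lambda>x. f x + g x)" unfolding lip_on_def
  proof (intro conjI ballI)
    fix x y assume "x \<in> M" "y \<in> M" "0 \<le> L1 \<and> (\<forall>x\<in>M. \<forall>y\<in>M. \<bar>f x - f y\<bar> \<le> L1 * d x y)"
      "0 \<le> L2 \<and> (\<forall>x\<in>M. \<forall>y\<in>M. \<bar>g x - g y\<bar> \<le> L2 * d x y)"
    then have "\<bar>f x - f y\<bar> \<le> L1 * d x y" "\<bar>g x - g y\<bar> \<le> L2 * d x y" by auto
    then show "\<bar>f x + g x - (f y + g y)\<bar> \<le> (L1 + L2) * d x y" by (simp add: distrib_right) 
  qed auto
  then show ?thesis using assms unfolding Lip0_def by auto
qed

lemma Lip0_scale: assumes "f \<in> Lip0 M d p" shows "(\<lambda>x. c * f x) \<in> Lip0 M d p"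
proof -
  obtain L where L: "lip_on M d L f" using assms unfolding Lip0_def by auto
  have "lip_on M d (\<bar>c\<bar>*L) (\<lambda>x. c * f x)" unfolding lip_on_def
  proof (intro conjI ballI)
    fix x y assume "x \<in> M" "y \<in> M"
    then have "\<bar>f x - f y\<bar> \<le> L * d x y" using L unfolding lip_on_def by auto
    then have "\<bar>c\<bar> * \<bar>f x - f y\<bar> \<le> \<bar>c\<bar> * (L * d x y)" by (simp add: mult_left_mono)
    then show "\<bar>c * f x - c * f y\<bar> \<le> \<bar>c\<bar> * L * d x y" by (simp add: abs_mult right_diff_distrib[symmetric] mult.assoc)
  qed (use L in \<open>auto simp: lip_on_def\<close>)
  then show ?thesis using assms unfolding Lip0_def by auto
qed

lemma Lip0_zero: "(\<lambda>x. 0) \<in> Lip0 M d p"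
  unfolding Lip0_def lip_on_def by auto

lemma lipnorm_zero_le: "lipnorm M d (\<lambda>x. 0) \<le> 1"
  using lipnorm_le[of 0 "\<lambda>x. 0"] by (auto simp: lip_on_def)


lemma dual_bdd: assumes "D \<in> Lip0_dual M d p"
  shows "bdd_above {\<bar>D f\<bar> | f. f \<in> Lip0 M d p \<and> lipnorm M d f \<le> 1}"
proof -
  obtain C where C: "\<forall>f\<in>Lip0 M d p. \<bar>D f\<bar> \<le> C * lipnorm M d f" using assms unfolding Lip0_dual_def by auto
  have "\<bar>D f\<bar> \<le> \<bar>C\<bar>" if "f \<in> Lip0 M d p" "lipnorm M d f \<le> 1" for f
  proof -
    have "C * lipnorm M d f \<le> \<bar>C\<bar> * lipnorm M d f" using lipnorm_nonneg[OF that(1)] by (simp add: mult_right_mono)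
    also have "\<dots> \<le> \<bar>C\<bar>" using that(2) lipnorm_nonneg[OF that(1)] by (simp add: mult_left_le)
    finally show ?thesis using C that(1) by fastforce
  qed
  then show ?thesis unfolding bdd_above_def by blast
qed

lemma dual_norm_le: assumes "\<And>f. f \<in> Lip0 M d p \<Longrightarrow> lipnorm M d f \<le> 1 \<Longrightarrow> \<bar>D f\<bar> \<le> B"
  shows "dual_norm M d p D \<le> B"
  unfolding dual_norm_def
  by (rule cSup_least) (use assms Lip0_zero lipnorm_zero_le in auto)

lemma dual_norm_upper: assumes "D \<in> Lip0_dual M d p" "f \<in> Lip0 M d p" "lipnorm M d f \<le> 1"
  shows "\<bar>D f\<bar> \<le> dual_norm M d p D"
  unfolding dual_norm_def
  by (rule cSup_upper) (use assms dual_bdd[OF assms(1)] in auto)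

lemma dual_norm_nonneg: assumes "D \<in> Lip0_dual M d p" shows "0 \<le> dual_norm M d p D"
  using dual_norm_upper[OF assms Lip0_zero lipnorm_zero_le] by linarith

lemma dual_zero_app: assumes "D \<in> Lip0_dual M d p" shows "D (\<lambda>x. 0) = 0"
proof -
  have "\<forall>f\<in>Lip0 M d p. \<forall>c. D (\<lambda>x. c * f x) = c * D f" using assms unfolding Lip0_dual_def by blast
  from this[rule_format, OF Lip0_zero, of 0] show ?thesis by simp
qed

lemma dual_apply: assumes "D \<in> Lip0_dual M d p" "g \<in> Lip0 M d p"
  shows "\<bar>D g\<bar> \<le> dual_norm M d p D * lipnorm M d g"
proof (cases "lipnorm M d g = 0")
  case True
  have "g x = 0" for x
  proof (cases "x \<in> M")
    case True
    then have "\<bar>g x\<bar> \<le> 0" using Lip0_bound[OF assms(2) True] \<open>lipnorm M d g = 0\<close> by simp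
    then show ?thesis by simp
  next
    case False then show ?thesis using assms(2) unfolding Lip0_def by auto
  qed
  then have "g = (\<lambda>x. 0)" by auto
  then show ?thesis using dual_zero_app[OF assms(1)] True by simp
next
  case False
  let ?l = "lipnorm M d g"
  have lpos: "?l > 0" using False lipnorm_nonneg[OF assms(2)] by linarith
  define h where "h = (\<lambda>x. (1/?l) * g x)"
  have h: "h \<in> Lip0 M d p" unfolding h_def by (rule Lip0_scale[OF assms(2)])
  have "lip_on M d 1 h" unfolding lip_on_def
  proof (intro conjI ballI)
    fix x y assume xy: "x \<in> M" "y \<in> M"
    have "\<bar>h x - h y\<bar> = \<bar>g x - g y\<bar> / ?l" unfolding h_def using lpos
      by (simp add: diff_divide_distrib[symmetric])
    also have "\<dots> \<le> d x y" using lip_lipnorm[OF assms(2)] xy lpos unfolding lip_on_def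
      by (simp add: divide_le_eq mult.commute)
    finally show "\<bar>h x - h y\<bar> \<le> 1 * d x y" by simp
  qed simp
  then have hn: "lipnorm M d h \<le> 1" by (rule lipnorm_le)
  have "D h = (1/?l) * D g" unfolding h_def using assms unfolding Lip0_dual_def by blast
  then have "D g = ?l * D h" using lpos by simp
  then have "\<bar>D g\<bar> = ?l * \<bar>D h\<bar>" using lpos by (simp add: abs_mult)
  also have "\<dots> \<le> ?l * dual_norm M d p D"
    using dual_norm_upper[OF assms(1) h hn] lpos by (simp add: mult_left_mono)
  finally show ?thesis by (simp add: mult.commute)
qed

lemma Lip0_dual_zero: "(\<lambda>f. 0) \<in> Lip0_dual M d p"
  unfolding Lip0_dual_def by (auto intro!: exI[of _ 0])

lemma Lip0_dual_add: assumes "a \<in> Lip0_dual M d p" "b \<in> Lip0_dual M d p"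
  shows "fadd a b \<in> Lip0_dual M d p"
proof -
  obtain C1 where C1: "\<forall>f\<in>Lip0 M d p. \<bar>a f\<bar> \<le> C1 * lipnorm M d f" using assms unfolding Lip0_dual_def by auto
  obtain C2 where C2: "\<forall>f\<in>Lip0 M d p. \<bar>b f\<bar> \<le> C2 * lipnorm M d f" using assms unfolding Lip0_dual_def by auto
  have "\<forall>f\<in>Lip0 M d p. \<bar>a f + b f\<bar> \<le> (C1 + C2) * lipnorm M d f"
  proof
    fix f assume "f \<in> Lip0 M d p"
    then have "\<bar>a f\<bar> \<le> C1 * lipnorm M d f" "\<bar>b f\<bar> \<le> C2 * lipnorm M d f" using C1 C2 by auto
    then show "\<bar>a f + b f\<bar> \<le> (C1 + C2) * lipnorm M d f" using abs_triangle_ineq[of "a f" "b f"] unfolding distrib_right by linarith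
  qed
  then have "\<exists>C. \<forall>f\<in>Lip0 M d p. \<bar>a f + b f\<bar> \<le> C * lipnorm M d f" by blast
  moreover have "\<forall>f\<in>Lip0 M d p. \<forall>g\<in>Lip0 M d p. a (\<lambda>x. f x + g x) + b (\<lambda>x. f x + g x) = (a f + b f) + (a g + b g)"
    using assms unfolding Lip0_dual_def by simp
  moreover have "\<forall>f\<in>Lip0 M d p. \<forall>e. a (\<lambda>x. e * f x) + b (\<lambda>x. e * f x) = e * (a f + b f)"
    using assms unfolding Lip0_dual_def by (simp add: distrib_left)
  moreover have "\<forall>f. f \<notin> Lip0 M d p \<longrightarrow> a f + b f = 0"
    using assms unfolding Lip0_dual_def by simp
  ultimately show ?thesis unfolding Lip0_dual_def fadd_def by blast
qed

lemma Lip0_dual_scale: assumes "a \<in> Lip0_dual M d p"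
  shows "fscale c a \<in> Lip0_dual M d p"
proof -
  obtain C1 where C1: "\<forall>f\<in>Lip0 M d p. \<bar>a f\<bar> \<le> C1 * lipnorm M d f" using assms unfolding Lip0_dual_def by auto
  have "\<forall>f\<in>Lip0 M d p. \<bar>c * a f\<bar> \<le> (\<bar>c\<bar> * C1) * lipnorm M d f"
  proof
    fix f assume "f \<in> Lip0 M d p"
    then have "\<bar>a f\<bar> \<le> C1 * lipnorm M d f" using C1 by auto
    then show "\<bar>c * a f\<bar> \<le> (\<bar>c\<bar> * C1) * lipnorm M d f" by (simp add: abs_mult mult_left_mono mult.assoc)
  qed
  then have "\<exists>C. \<forall>f\<in>Lip0 M d p. \<bar>c * a f\<bar> \<le> C * lipnorm M d f" by blast
  moreover have "\<forall>f\<in>Lip0 M d p. \<forall>g\<in>Lip0 M d p. c * a (\<lambda>x. f x + g x) = c * a f + c * a g"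
    using assms unfolding Lip0_dual_def by (simp add: distrib_left)
  moreover have "\<forall>f\<in>Lip0 M d p. \<forall>e. c * a (\<lambda>x. e * f x) = e * (c * a f)"
    using assms unfolding Lip0_dual_def by simp
  moreover have "\<forall>f. f \<notin> Lip0 M d p \<longrightarrow> c * a f = 0"
    using assms unfolding Lip0_dual_def by simp
  ultimately show ?thesis unfolding Lip0_dual_def fscale_def by blast
qed

lemma Lip0_dual_delta: assumes "x \<in> M" shows "delta M d p x \<in> Lip0_dual M d p"
proof -
  have "\<forall>f\<in>Lip0 M d p. \<bar>delta M d p x f\<bar> \<le> d p x * lipnorm M d f"
    using Lip0_bound assms by (auto simp: delta_def mult.commute)
  then have "\<exists>C. \<forall>f\<in>Lip0 M d p. \<bar>delta M d p x f\<bar> \<le> C * lipnorm M d f" by blast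
  then show ?thesis unfolding Lip0_dual_def using Lip0_add Lip0_scale
    by (auto simp: delta_def)
qed

lemma Lip0_dual_sum: assumes "finite F" "F \<subseteq> M"
  shows "(\<lambda>f. \<Sum>x\<in>F. c x * delta M d p x f) \<in> Lip0_dual M d p"
  using assms
proof (induction F rule: finite_induct)
  case empty then show ?case using Lip0_dual_zero by simp
next
  case (insert a F)
  have "(\<lambda>f. \<Sum>x\<in>insert a F. c x * delta M d p x f) = fadd (fscale (c a) (delta M d p a)) (\<lambda>f. \<Sum>x\<in>F. c x * delta M d p x f)"
    using insert by (simp add: fadd_def fscale_def)
  then show ?case using insert Lip0_dual_add Lip0_dual_scale Lip0_dual_delta by auto
qed

lemma dual_norm_add: assumes "a \<in> Lip0_dual M d p" "b \<in> Lip0_dual M d p"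
  shows "dual_norm M d p (fadd a b) \<le> dual_norm M d p a + dual_norm M d p b"
proof (rule dual_norm_le)
  fix f assume "f \<in> Lip0 M d p" "lipnorm M d f \<le> 1"
  then have "\<bar>a f\<bar> \<le> dual_norm M d p a" "\<bar>b f\<bar> \<le> dual_norm M d p b" using dual_norm_upper assms by auto
  then show "\<bar>fadd a b f\<bar> \<le> dual_norm M d p a + dual_norm M d p b"
    unfolding fadd_def by (meson abs_triangle_ineq add_mono order_trans)
qed

lemma dual_norm_zero: "dual_norm M d p (\<lambda>f. 0) \<le> 0"
  by (rule dual_norm_le) auto


lemma Lip0_dual_diff: assumes "a \<in> Lip0_dual M d p" "finite F" "F \<subseteq> M"
  shows "(\<lambda>f. a f - (\<Sum>x\<in>F. c x * delta M d p x f)) \<in> Lip0_dual M d p"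
proof -
  have "(\<lambda>f. a f - (\<Sum>x\<in>F. c x * delta M d p x f)) = fadd a (fscale (-1) (\<lambda>f. \<Sum>x\<in>F. c x * delta M d p x f))"
    by (simp add: fadd_def fscale_def)
  then show ?thesis using Lip0_dual_add[OF assms(1) Lip0_dual_scale[OF Lip0_dual_sum[OF assms(2,3)]]] by simp
qed

lemma sum_restr: assumes "finite F" "G \<subseteq> F"
  shows "(\<Sum>x\<in>F. (if x \<in> G then c x else 0) * h x) = (\<Sum>x\<in>G. c x * h x :: real)"
proof -
  have "(\<Sum>x\<in>F. (if x \<in> G then c x else 0) * h x) = (\<Sum>x\<in>F. if x \<in> G then c x * h x else 0)"
    by (rule sum.cong) auto
  also have "\<dots> = (\<Sum>x\<in>F \<inter> G. c x * h x)" by (rule sum.inter_restrict[OF assms(1), symmetric])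
  also have "F \<inter> G = G" using assms by auto
  finally show ?thesis .
qed

lemma Free_subset: assumes "A \<subseteq> B" shows "Free M d p A \<subseteq> Free M d p B"
proof
  fix \<mu> assume "\<mu> \<in> Free M d p A"
  then have 1: "\<mu> \<in> Lip0_dual M d p" and 2: "\<And>e. e > 0 \<Longrightarrow> \<exists>F c. finite F \<and> F \<subseteq> A \<and>
      dual_norm M d p (\<lambda>f. \<mu> f - (\<Sum>x\<in>F. c x * delta M d p x f)) < e"
    unfolding Free_def by auto
  have "\<exists>F c. finite F \<and> F \<subseteq> B \<and>
      dual_norm M d p (\<lambda>f. \<mu> f - (\<Sum>x\<in>F. c x * delta M d p x f)) < e" if e: "e > 0" for e
  proof -
    obtain F c where "finite F" "F \<subseteq> A" "dual_norm M d p (\<lambda>f. \<mu> f - (\<Sum>x\<in>F. c x * delta M d p x f)) < e"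
      using 2[OF e] by blast
    then show ?thesis using assms by (intro exI[of _ F] exI[of _ c]) auto
  qed
  then show "\<mu> \<in> Free M d p B" using 1 unfolding Free_def by blast
qed

lemma Free_zero: "(\<lambda>f. 0) \<in> Free M d p A"
proof -
  have "dual_norm M d p (\<lambda>f. (\<lambda>f. 0) f - (\<Sum>x\<in>{}. c x * delta M d p x f)) < e" if "e > 0" for e and c :: "'a \<Rightarrow> real"
    using dual_norm_zero that by simp
  then show ?thesis unfolding Free_def using Lip0_dual_zero by blast
qed

lemma Free_add: assumes "a \<in> Free M d p A" "b \<in> Free M d p A" "A \<subseteq> M"
  shows "fadd a b \<in> Free M d p A"
proof -
  have aL: "a \<in> Lip0_dual M d p" and bL: "b \<in> Lip0_dual M d p" using assms unfolding Free_def by auto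
  have "\<exists>F c. finite F \<and> F \<subseteq> A \<and>
      dual_norm M d p (\<lambda>f. fadd a b f - (\<Sum>x\<in>F. c x * delta M d p x f)) < e" if e: "e > 0" for e
  proof -
    have e2: "e/2 > 0" using e by simp
    have "\<forall>e>0. \<exists>F c. finite F \<and> F \<subseteq> A \<and> dual_norm M d p (\<lambda>f. a f - (\<Sum>x\<in>F. c x * delta M d p x f)) < e"
      using assms(1) unfolding Free_def by blast
    then obtain Fa ca where Fa: "finite Fa" "Fa \<subseteq> A" "dual_norm M d p (\<lambda>f. a f - (\<Sum>x\<in>Fa. ca x * delta M d p x f)) < e/2"
      using e2 by blast
    have "\<forall>e>0. \<exists>F c. finite F \<and> F \<subseteq> A \<and> dual_norm M d p (\<lambda>f. b f - (\<Sum>x\<in>F. c x * delta M d p x f)) < e"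
      using assms(2) unfolding Free_def by blast
    then obtain Fb cb where Fb: "finite Fb" "Fb \<subseteq> A" "dual_norm M d p (\<lambda>f. b f - (\<Sum>x\<in>Fb. cb x * delta M d p x f)) < e/2"
      using e2 by blast
    define c where "c x = (if x \<in> Fa then ca x else 0) + (if x \<in> Fb then cb x else 0)" for x
    let ?Da = "\<lambda>f. a f - (\<Sum>x\<in>Fa. ca x * delta M d p x f)"
    let ?Db = "\<lambda>f. b f - (\<Sum>x\<in>Fb. cb x * delta M d p x f)"
    have fin: "finite (Fa \<union> Fb)" using Fa Fb by auto
    have eq: "(\<lambda>f. fadd a b f - (\<Sum>x\<in>Fa \<union> Fb. c x * delta M d p x f)) = fadd ?Da ?Db"
    proof
      fix f
      have "(\<Sum>x\<in>Fa \<union> Fb. c x * delta M d p x f) =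
         (\<Sum>x\<in>Fa \<union> Fb. (if x \<in> Fa then ca x else 0) * delta M d p x f + (if x \<in> Fb then cb x else 0) * delta M d p x f)"
        unfolding c_def distrib_right by (rule refl)
      also have "\<dots> = (\<Sum>x\<in>Fa \<union> Fb. (if x \<in> Fa then ca x else 0) * delta M d p x f) +
         (\<Sum>x\<in>Fa \<union> Fb. (if x \<in> Fb then cb x else 0) * delta M d p x f)"
        by (rule sum.distrib)
      also have "\<dots> = (\<Sum>x\<in>Fa. ca x * delta M d p x f) + (\<Sum>x\<in>Fb. cb x * delta M d p x f)"
        using sum_restr[OF fin Un_upper1, of ca "\<lambda>x. delta M d p x f"] sum_restr[OF fin Un_upper2, of cb "\<lambda>x. delta M d p x f"]
        by simp
      finally show "fadd a b f - (\<Sum>x\<in>Fa \<union> Fb. c x * delta M d p x f) = fadd ?Da ?Db f"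
        by (simp add: fadd_def)
    qed
    have "?Da \<in> Lip0_dual M d p" using Lip0_dual_diff[OF aL Fa(1)] Fa(2) assms(3) by blast
    moreover have "?Db \<in> Lip0_dual M d p" using Lip0_dual_diff[OF bL Fb(1)] Fb(2) assms(3) by blast
    ultimately have "dual_norm M d p (fadd ?Da ?Db) < e"
      using dual_norm_add[of ?Da ?Db] Fa(3) Fb(3) by linarith
    then have "dual_norm M d p (\<lambda>f. fadd a b f - (\<Sum>x\<in>Fa \<union> Fb. c x * delta M d p x f)) < e"
      using eq by simp
    moreover have "Fa \<union> Fb \<subseteq> A" using Fa(2) Fb(2) by simp
    ultimately show ?thesis using fin by blast
  qed
  then show ?thesis using Lip0_dual_add[OF aL bL] unfolding Free_def by blast
qed

lemma Free_sum: assumes "finite I" "\<And>k. k \<in> I \<Longrightarrow> \<nu> k \<in> Free M d p A" "A \<subseteq> M"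
  shows "(\<lambda>f. \<Sum>k\<in>I. \<nu> k f) \<in> Free M d p A"
  using assms(1,2)
proof (induction I rule: finite_induct)
  case empty then show ?case using Free_zero by simp
next
  case (insert a I)
  have "(\<lambda>f. \<Sum>k\<in>insert a I. \<nu> k f) = fadd (\<nu> a) (\<lambda>f. \<Sum>k\<in>I. \<nu> k f)"
    using insert by (simp add: fadd_def)
  then show ?case using insert Free_add assms(3) by auto
qed

lemma Lip0_dual_sumk: assumes "finite I" "\<And>k. k \<in> I \<Longrightarrow> \<nu> k \<in> Lip0_dual M d p"
  shows "(\<lambda>f. \<Sum>k\<in>I. \<nu> k f) \<in> Lip0_dual M d p"
  using assms
proof (induction I rule: finite_induct)
  case empty then show ?case using Lip0_dual_zero by simp
next
  case (insert a I)
  have "(\<lambda>f. \<Sum>k\<in>insert a I. \<nu> k f) = fadd (\<nu> a) (\<lambda>f. \<Sum>k\<in>I. \<nu> k f)"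
    using insert by (simp add: fadd_def)
  then show ?case using insert Lip0_dual_add by auto
qed

lemma dual_norm_sumk: assumes "finite I" "\<And>k. k \<in> I \<Longrightarrow> \<nu> k \<in> Lip0_dual M d p"
  shows "dual_norm M d p (\<lambda>f. \<Sum>k\<in>I. \<nu> k f) \<le> (\<Sum>k\<in>I. dual_norm M d p (\<nu> k))"
  using assms
proof (induction I rule: finite_induct)
  case empty then show ?case using dual_norm_zero by simp
next
  case (insert a I)
  have "(\<lambda>f. \<Sum>k\<in>insert a I. \<nu> k f) = fadd (\<nu> a) (\<lambda>f. \<Sum>k\<in>I. \<nu> k f)"
    using insert by (simp add: fadd_def)
  moreover have "\<nu> a \<in> Lip0_dual M d p" using insert by auto
  moreover have "(\<lambda>f. \<Sum>k\<in>I. \<nu> k f) \<in> Lip0_dual M d p" using insert Lip0_dual_sumk by auto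
  ultimately have "dual_norm M d p (\<lambda>f. \<Sum>k\<in>insert a I. \<nu> k f) \<le> dual_norm M d p (\<nu> a) + dual_norm M d p (\<lambda>f. \<Sum>k\<in>I. \<nu> k f)"
    using dual_norm_add by metis
  then show ?case using insert by simp
qed

lemma dual_sum_app: assumes "D \<in> Lip0_dual M d p" "finite I" "\<And>i. i \<in> I \<Longrightarrow> g i \<in> Lip0 M d p"
  shows "(\<lambda>x. \<Sum>i\<in>I. g i x) \<in> Lip0 M d p \<and> D (\<lambda>x. \<Sum>i\<in>I. g i x) = (\<Sum>i\<in>I. D (g i))"
  using assms(2,3)
proof (induction I rule: finite_induct)
  case empty then show ?case using Lip0_zero dual_zero_app[OF assms(1)] by simp
next
  case (insert a I)
  then have ga: "g a \<in> Lip0 M d p" and IH: "(\<lambda>x. \<Sum>i\<in>I. g i x) \<in> Lip0 M d p" "D (\<lambda>x. \<Sum>i\<in>I. g i x) = (\<Sum>i\<in>I. D (g i))" by auto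
  have e: "(\<lambda>x. \<Sum>i\<in>insert a I. g i x) = (\<lambda>x. g a x + (\<lambda>x. \<Sum>i\<in>I. g i x) x)" using insert by simp
  have "\<forall>f\<in>Lip0 M d p. \<forall>g\<in>Lip0 M d p. D (\<lambda>x. f x + g x) = D f + D g"
    using assms(1) unfolding Lip0_dual_def by blast
  from this[rule_format, OF ga IH(1)]
  have "D (\<lambda>x. g a x + (\<lambda>x. \<Sum>i\<in>I. g i x) x) = D (g a) + D (\<lambda>x. \<Sum>i\<in>I. g i x)" by simp
  then show ?case using e Lip0_add[OF ga IH(1)] IH(2) insert by simp
qed

end


definition mulk :: "'a set \<Rightarrow> ('a \<Rightarrow> real) \<Rightarrow> ('a \<Rightarrow> real) \<Rightarrow> ('a \<Rightarrow> real)" where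
  "mulk M \<phi> f = (\<lambda>x. if x \<in> M then \<phi> x * f x else 0)"

definition Tk :: "'a set \<Rightarrow> ('a \<Rightarrow> 'a \<Rightarrow> real) \<Rightarrow> 'a \<Rightarrow> ('a \<Rightarrow> real) \<Rightarrow> (('a \<Rightarrow> real) \<Rightarrow> real) \<Rightarrow> (('a \<Rightarrow> real) \<Rightarrow> real)" where
  "Tk M d p \<phi> \<mu> = (\<lambda>f. if f \<in> Lip0 M d p then \<mu> (mulk M \<phi> f) else 0)"

lemma est_real:
  fixes a b u v L Lp R D :: real
  assumes "0 \<le> a" "a \<le> 1" "\<bar>u - v\<bar> \<le> L * D" "\<bar>v\<bar> \<le> L * R" "\<bar>a - b\<bar> \<le> Lp * D"
    "0 \<le> L" "0 \<le> D" "0 \<le> R" "0 \<le> Lp"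
  shows "\<bar>a * u - b * v\<bar> \<le> (1 + R * Lp) * L * D"
proof -
  have "a * u - b * v = a * (u - v) + v * (a - b)" by (simp add: algebra_simps)
  then have "\<bar>a * u - b * v\<bar> \<le> \<bar>a\<bar> * \<bar>u - v\<bar> + \<bar>v\<bar> * \<bar>a - b\<bar>"
    by (metis abs_mult abs_triangle_ineq)
  also have "\<bar>a\<bar> * \<bar>u - v\<bar> \<le> 1 * (L * D)" using assms by (intro mult_mono) auto
  also have "\<bar>v\<bar> * \<bar>a - b\<bar> \<le> (L * R) * (Lp * D)" using assms by (intro mult_mono) auto
  finally show ?thesis by (simp add: algebra_simps)
qed

lemma est_real2:
  fixes a b u v L Lp R D :: real
  assumes "\<bar>u\<bar> \<le> L * R" "\<bar>a - b\<bar> \<le> Lp * D" "b = 0"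
    "0 \<le> L" "0 \<le> D" "0 \<le> R" "0 \<le> Lp"
  shows "\<bar>a * u - b * v\<bar> \<le> (1 + R * Lp) * L * D"
proof -
  have "\<bar>a * u - b * v\<bar> = \<bar>u\<bar> * \<bar>a - b\<bar>" using assms(3) by (simp add: abs_mult)
  also have "\<dots> \<le> (L * R) * (Lp * D)" using assms by (intro mult_mono) auto
  also have "\<dots> \<le> (1 + R * Lp) * L * D" using assms by (simp add: algebra_simps)
  finally show ?thesis .
qed

context pms
begin

lemma mul_lip:
  assumes lp: "lip_on M d Lp \<phi>" and ph: "\<forall>x\<in>M. 0 \<le> \<phi> x \<and> \<phi> x \<le> 1"
    and R: "\<forall>x\<in>M. \<phi> x \<noteq> 0 \<longrightarrow> d p x \<le> R" "0 \<le> R" and f: "f \<in> Lip0 M d p"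
  shows "mulk M \<phi> f \<in> Lip0 M d p \<and> lipnorm M d (mulk M \<phi> f) \<le> (1 + R * Lp) * lipnorm M d f"
proof -
  let ?L = "lipnorm M d f"
  have L0: "0 \<le> ?L" by (rule lipnorm_nonneg[OF f])
  have lf: "\<bar>f x - f y\<bar> \<le> ?L * d x y" if "x \<in> M" "y \<in> M" for x y
    using lip_lipnorm[OF f] that unfolding lip_on_def by auto
  have bnd: "\<bar>f z\<bar> \<le> ?L * R" if "z \<in> M" "\<phi> z \<noteq> 0" for z
  proof -
    have "\<bar>f z\<bar> \<le> ?L * d p z" by (rule Lip0_bound[OF f that(1)])
    also have "\<dots> \<le> ?L * R" using R that L0 by (simp add: mult_left_mono)
    finally show ?thesis .
  qed
  have Lp0: "0 \<le> Lp" and lph: "\<bar>\<phi> x - \<phi> y\<bar> \<le> Lp * d x y" if "x \<in> M" "y \<in> M" for x y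
    using lp that unfolding lip_on_def by auto
  have one: "\<bar>\<phi> x * f x - \<phi> y * f y\<bar> \<le> (1 + R * Lp) * ?L * d x y"
    if xy: "x \<in> M" "y \<in> M" and nz: "\<phi> x \<noteq> 0" for x y
  proof (cases "\<phi> y = 0")
    case True
    show ?thesis by (rule est_real2[OF bnd[OF xy(1) nz] lph[OF xy] True L0 dnn R(2) Lp0[OF xy]])
  next
    case False
    show ?thesis
      by (rule est_real) (use ph xy lf[OF xy] bnd[OF xy(2) False] lph[OF xy] L0 dnn R(2) Lp0[OF xy] in auto)
  qed
  have all: "\<bar>\<phi> x * f x - \<phi> y * f y\<bar> \<le> (1 + R * Lp) * ?L * d x y" if xy: "x \<in> M" "y \<in> M" for x y
  proof (cases "\<phi> x \<noteq> 0")
    case True then show ?thesis using one xy by blast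
  next
    case F: False
    show ?thesis
    proof (cases "\<phi> y \<noteq> 0")
      case True
      have "\<bar>\<phi> y * f y - \<phi> x * f x\<bar> \<le> (1 + R * Lp) * ?L * d y x" using one xy True by blast
      then show ?thesis by (simp add: dcom abs_minus_commute)
    next
      case False
      have "0 \<le> (1 + R * Lp) * ?L * d x y" using L0 R(2) Lp0[OF xy] dnn by simp
      then show ?thesis using F False by simp
    qed
  qed
  have K0: "0 \<le> (1 + R * Lp) * ?L" using L0 R(2) lp unfolding lip_on_def by simp
  have lipm: "lip_on M d ((1 + R * Lp) * ?L) (mulk M \<phi> f)"
    unfolding lip_on_def mulk_def using all K0 by auto
  have "mulk M \<phi> f p = 0" "\<forall>x. x \<notin> M \<longrightarrow> mulk M \<phi> f x = 0"
    using f pM unfolding Lip0_def mulk_def by auto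
  then have "mulk M \<phi> f \<in> Lip0 M d p" using lipm unfolding Lip0_def by blast
  then show ?thesis using lipnorm_le[OF lipm] by simp
qed


lemma mulk_add: "mulk M \<phi> (\<lambda>x. f x + g x) = (\<lambda>x. mulk M \<phi> f x + mulk M \<phi> g x)"
  unfolding mulk_def by (auto simp: algebra_simps)

lemma mulk_scale: "mulk M \<phi> (\<lambda>x. c * f x) = (\<lambda>x. c * mulk M \<phi> f x)"
  unfolding mulk_def by (auto simp: algebra_simps)

lemma Tk_props:
  assumes lp: "lip_on M d Lp \<phi>" and ph: "\<forall>x\<in>M. 0 \<le> \<phi> x \<and> \<phi> x \<le> 1"
    and R: "\<forall>x\<in>M. \<phi> x \<noteq> 0 \<longrightarrow> d p x \<le> R" "0 \<le> R" and mu: "\<mu> \<in> Lip0_dual M d p"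
  shows "Tk M d p \<phi> \<mu> \<in> Lip0_dual M d p \<and> dual_norm M d p (Tk M d p \<phi> \<mu>) \<le> (1 + R * Lp) * dual_norm M d p \<mu>"
proof -
  let ?K = "1 + R * Lp"
  have K0: "0 \<le> ?K" using R(2) lp unfolding lip_on_def by simp
  have dn0: "0 \<le> dual_norm M d p \<mu>" by (rule dual_norm_nonneg[OF mu])
  note ml = mul_lip[OF lp ph R]
  have b: "\<bar>\<mu> (mulk M \<phi> f)\<bar> \<le> (dual_norm M d p \<mu> * ?K) * lipnorm M d f" if f: "f \<in> Lip0 M d p" for f
  proof -
    have "\<bar>\<mu> (mulk M \<phi> f)\<bar> \<le> dual_norm M d p \<mu> * lipnorm M d (mulk M \<phi> f)"
      using dual_apply[OF mu] ml[OF f] by blast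
    also have "\<dots> \<le> dual_norm M d p \<mu> * (?K * lipnorm M d f)"
      using ml[OF f] dn0 by (intro mult_left_mono) auto
    finally show ?thesis by (simp add: mult.assoc)
  qed
  have add: "\<forall>f\<in>Lip0 M d p. \<forall>g\<in>Lip0 M d p. \<mu> (\<lambda>x. f x + g x) = \<mu> f + \<mu> g"
   and sc: "\<forall>f\<in>Lip0 M d p. \<forall>c. \<mu> (\<lambda>x. c * f x) = c * \<mu> f"
    using mu unfolding Lip0_dual_def by blast+
  have "\<forall>f\<in>Lip0 M d p. \<forall>g\<in>Lip0 M d p. Tk M d p \<phi> \<mu> (\<lambda>x. f x + g x) = Tk M d p \<phi> \<mu> f + Tk M d p \<phi> \<mu> g"
  proof (intro ballI)
    fix f g assume f: "f \<in> Lip0 M d p" and g: "g \<in> Lip0 M d p"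
    have "Tk M d p \<phi> \<mu> (\<lambda>x. f x + g x) = \<mu> (\<lambda>x. mulk M \<phi> f x + mulk M \<phi> g x)"
      unfolding Tk_def using Lip0_add[OF f g] by (simp add: mulk_add)
    also have "\<dots> = \<mu> (mulk M \<phi> f) + \<mu> (mulk M \<phi> g)"
      using add ml[OF f] ml[OF g] by blast
    finally show "Tk M d p \<phi> \<mu> (\<lambda>x. f x + g x) = Tk M d p \<phi> \<mu> f + Tk M d p \<phi> \<mu> g"
      unfolding Tk_def using f g by simp
  qed
  moreover have "\<forall>f\<in>Lip0 M d p. \<forall>c. Tk M d p \<phi> \<mu> (\<lambda>x. c * f x) = c * Tk M d p \<phi> \<mu> f"
  proof (intro ballI allI)
    fix f c assume f: "f \<in> Lip0 M d p"
    have "Tk M d p \<phi> \<mu> (\<lambda>x. c * f x) = \<mu> (\<lambda>x. c * mulk M \<phi> f x)"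
      unfolding Tk_def using Lip0_scale[OF f] by (simp add: mulk_scale)
    also have "\<dots> = c * \<mu> (mulk M \<phi> f)"
      using sc ml[OF f] by blast
    finally show "Tk M d p \<phi> \<mu> (\<lambda>x. c * f x) = c * Tk M d p \<phi> \<mu> f"
      unfolding Tk_def using f by simp
  qed
  moreover have "\<exists>C. \<forall>f\<in>Lip0 M d p. \<bar>Tk M d p \<phi> \<mu> f\<bar> \<le> C * lipnorm M d f"
    using b unfolding Tk_def by auto
  moreover have "\<forall>f. f \<notin> Lip0 M d p \<longrightarrow> Tk M d p \<phi> \<mu> f = 0" unfolding Tk_def by simp
  ultimately have T: "Tk M d p \<phi> \<mu> \<in> Lip0_dual M d p" unfolding Lip0_dual_def by blast
  have "dual_norm M d p (Tk M d p \<phi> \<mu>) \<le> dual_norm M d p \<mu> * ?K"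
  proof (rule dual_norm_le)
    fix f assume f: "f \<in> Lip0 M d p" "lipnorm M d f \<le> 1"
    have "\<bar>Tk M d p \<phi> \<mu> f\<bar> \<le> (dual_norm M d p \<mu> * ?K) * lipnorm M d f"
      using b[OF f(1)] f(1) unfolding Tk_def by simp
    also have "\<dots> \<le> dual_norm M d p \<mu> * ?K" using f dn0 K0 by (simp add: mult_left_le)
    finally show "\<bar>Tk M d p \<phi> \<mu> f\<bar> \<le> dual_norm M d p \<mu> * ?K" .
  qed
  then show ?thesis using T by (simp add: mult.commute)
qed

lemma Tk_free:
  assumes lp: "lip_on M d Lp \<phi>" and ph: "\<forall>x\<in>M. 0 \<le> \<phi> x \<and> \<phi> x \<le> 1"
    and R: "\<forall>x\<in>M. \<phi> x \<noteq> 0 \<longrightarrow> d p x \<le> R" "0 \<le> R" and mu: "\<mu> \<in> Free M d p M"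
    and A: "{x \<in> M. \<phi> x \<noteq> 0} \<subseteq> A"
  shows "Tk M d p \<phi> \<mu> \<in> Free M d p A"
proof -
  let ?K = "1 + R * Lp"
  have K0: "0 \<le> ?K" using R(2) lp unfolding lip_on_def by simp
  have muL: "\<mu> \<in> Lip0_dual M d p" using mu unfolding Free_def by blast
  have apx: "\<forall>e>0. \<exists>F c. finite F \<and> F \<subseteq> M \<and> dual_norm M d p (\<lambda>f. \<mu> f - (\<Sum>x\<in>F. c x * delta M d p x f)) < e"
    using mu unfolding Free_def by blast
  note TP = Tk_props[OF lp ph R]
  have "\<exists>F c. finite F \<and> F \<subseteq> A \<and>
      dual_norm M d p (\<lambda>f. Tk M d p \<phi> \<mu> f - (\<Sum>x\<in>F. c x * delta M d p x f)) < e" if e: "e > 0" for e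
  proof -
    have e': "e / (?K + 1) > 0" using e K0 by simp
    obtain F c where F: "finite F" "F \<subseteq> M" and Fn: "dual_norm M d p (\<lambda>f. \<mu> f - (\<Sum>x\<in>F. c x * delta M d p x f)) < e / (?K + 1)"
      using apx e' by blast
    define D where "D = (\<lambda>f. \<mu> f - (\<Sum>x\<in>F. c x * delta M d p x f))"
    have DL: "D \<in> Lip0_dual M d p" unfolding D_def by (rule Lip0_dual_diff[OF muL F])
    define F' where "F' = {x \<in> F. \<phi> x \<noteq> 0}"
    define c' where "c' x = c x * \<phi> x" for x
    have F'fin: "finite F'" using F unfolding F'_def by simp
    have F'A: "F' \<subseteq> A" using F A unfolding F'_def by auto
    have eq: "(\<lambda>f. Tk M d p \<phi> \<mu> f - (\<Sum>x\<in>F'. c' x * delta M d p x f)) = Tk M d p \<phi> D"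
    proof
      fix f
      show "Tk M d p \<phi> \<mu> f - (\<Sum>x\<in>F'. c' x * delta M d p x f) = Tk M d p \<phi> D f"
      proof (cases "f \<in> Lip0 M d p")
        case False then show ?thesis unfolding Tk_def delta_def by simp
      next
        case True
        have mf: "mulk M \<phi> f \<in> Lip0 M d p" using mul_lip[OF lp ph R True] by blast
        have "(\<Sum>x\<in>F. c x * delta M d p x (mulk M \<phi> f)) = (\<Sum>x\<in>F. c x * (\<phi> x * f x))"
          using F(2) mf by (intro sum.cong) (auto simp: delta_def mulk_def)
        also have "\<dots> = (\<Sum>x\<in>F'. c x * (\<phi> x * f x))"
          using F(1) unfolding F'_def by (intro sum.mono_neutral_right) auto
        also have "\<dots> = (\<Sum>x\<in>F'. c' x * delta M d p x f)"
          using True unfolding c'_def delta_def by (simp add: mult.assoc)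
        finally show ?thesis unfolding Tk_def D_def using True by simp
      qed
    qed
    have "dual_norm M d p (Tk M d p \<phi> D) \<le> ?K * dual_norm M d p D" using TP[OF DL] by blast
    also have "\<dots> \<le> ?K * (e / (?K + 1))" using Fn K0 unfolding D_def by (intro mult_left_mono) auto
    also have "\<dots> < e" using e K0 by (simp add: field_simps)
    finally show ?thesis using eq F'fin F'A by (intro exI[of _ F'] exI[of _ c']) simp
  qed
  then show ?thesis using TP[OF muL] unfolding Free_def by blast
qed
end


theorem lemma2p4:
  fixes M :: "'a set" and d :: "'a \<Rightarrow> 'a \<Rightarrow> real" and p :: 'a
    and n :: nat and \<phi> :: "nat \<Rightarrow> 'a \<Rightarrow> real" and A :: "nat \<Rightarrow> 'a set"
  assumes "Metric_space M d"
    and "Metric_space.mcomplete M d"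
    and "p \<in> M"
    and "\<And>k. k < n \<Longrightarrow> \<exists>L. lip_on M d L (\<phi> k)"
    and "\<And>k x. k < n \<Longrightarrow> x \<in> M \<Longrightarrow> \<phi> k x \<ge> 0"
    and "\<And>k. k < n \<Longrightarrow>
           Metric_space.mbounded M d (Metric_space.mtopology M d closure_of {x \<in> M. \<phi> k x \<noteq> 0})"
    and "\<And>x. x \<in> M \<Longrightarrow> (\<Sum>k<n. \<phi> k x) = 1"
    and "\<And>k. k < n \<Longrightarrow> A k \<subseteq> M"
    and "\<And>k. k < n \<Longrightarrow> p \<in> A k"
    and "\<And>k. k < n \<Longrightarrow> Metric_space.mtopology M d closure_of {x \<in> M. \<phi> k x \<noteq> 0} \<subseteq> A k"
  shows "Free_iso_complemented_in_sum M d p n A"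
proof -
  interpret pms M d p using assms(1,3) by (rule pms.intro)
  interpret Metric_space M d by (rule assms(1))
  have "\<forall>k. \<exists>L. k < n \<longrightarrow> lip_on M d L (\<phi> k)" using assms(4) by blast
  then obtain Lp where lp: "\<And>k. k < n \<Longrightarrow> lip_on M d (Lp k) (\<phi> k)" by metis
  have ph: "\<forall>x\<in>M. 0 \<le> \<phi> k x \<and> \<phi> k x \<le> 1" if k: "k < n" for k
  proof
    fix x assume x: "x \<in> M"
    have "\<phi> k x \<le> (\<Sum>j<n. \<phi> j x)" using k x assms(5) by (intro member_le_sum) auto
    then show "0 \<le> \<phi> k x \<and> \<phi> k x \<le> 1" using assms(5)[OF k x] assms(7)[OF x] by simp
  qed
  have supp: "{x \<in> M. \<phi> k x \<noteq> 0} \<subseteq> mtopology closure_of {x \<in> M. \<phi> k x \<noteq> 0}" for k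
    by (rule closure_of_subset) auto
  have "\<exists>R. 0 \<le> R \<and> (\<forall>x\<in>M. \<phi> k x \<noteq> 0 \<longrightarrow> d p x \<le> R)" if k: "k < n" for k
  proof -
    obtain c B where cB: "mtopology closure_of {x \<in> M. \<phi> k x \<noteq> 0} \<subseteq> mcball c B"
      using assms(6)[OF k] unfolding mbounded_def by blast
    have "d p x \<le> max 0 (d p c + B)" if "x \<in> M" "\<phi> k x \<noteq> 0" for x
    proof -
      have "x \<in> mcball c B" using supp cB that by blast
      then have "c \<in> M" "d c x \<le> B" unfolding mcball_def by auto
      then have "d p x \<le> d p c + d c x" using triangle assms(3) that(1) by blast
      then show ?thesis using \<open>d c x \<le> B\<close> by linarith
    qed
    then show ?thesis by (intro exI[of _ "max 0 (d p c + B)"]) auto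
  qed
  then obtain R where R: "\<And>k. k < n \<Longrightarrow> 0 \<le> R k \<and> (\<forall>x\<in>M. \<phi> k x \<noteq> 0 \<longrightarrow> d p x \<le> R k)" by metis
  have Asupp: "{x \<in> M. \<phi> k x \<noteq> 0} \<subseteq> A k" if "k < n" for k
    using supp assms(10)[OF that] by blast
  define K where "K k = 1 + R k * Lp k" for k
  have K0: "0 \<le> K k" if "k < n" for k
    using R[OF that] lp[OF that] unfolding K_def lip_on_def by simp
  define CT where "CT = (\<Sum>k<n. K k)"
  have CT0: "0 \<le> CT" unfolding CT_def using K0 by (intro sum_nonneg) auto
  define TT where "TT \<mu> = (\<lambda>k. if k < n then Tk M d p (\<phi> k) \<mu> else (\<lambda>f. 0))" for \<mu>
  define SS where "SS \<nu> = (\<lambda>f. \<Sum>k<n. \<nu> k f)" for \<nu> :: "nat \<Rightarrow> ('a \<Rightarrow> real) \<Rightarrow> real"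
  define X where "X = Free M d p M"
  define Y where "Y = DSum M d p n A"
  have XL: "\<mu> \<in> Lip0_dual M d p" if "\<mu> \<in> X" for \<mu> using that unfolding X_def Free_def by blast
  have F1: "TT \<mu> \<in> Y" if mu: "\<mu> \<in> X" for \<mu>
    unfolding Y_def DSum_def TT_def
    using Tk_free[OF lp ph conjunct2[OF R] conjunct1[OF R] mu[unfolded X_def] Asupp] by auto
  have F2: "SS \<nu> \<in> X" if nu: "\<nu> \<in> Y" for \<nu>
  proof -
    have "\<nu> k \<in> Free M d p M" if k: "k \<in> {..<n}" for k
      using nu Free_subset[OF assms(8)] k unfolding Y_def DSum_def by blast
    then show ?thesis unfolding SS_def X_def by (intro Free_sum) auto
  qed
  have F3: "SS (TT \<mu>) = \<mu>" if mu: "\<mu> \<in> X" for \<mu>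
  proof
    fix f
    show "SS (TT \<mu>) f = \<mu> f"
    proof (cases "f \<in> Lip0 M d p")
      case False
      then show ?thesis using XL[OF mu] unfolding SS_def TT_def Tk_def Lip0_dual_def by simp
    next
      case True
      have g: "mulk M (\<phi> k) f \<in> Lip0 M d p" if "k \<in> {..<n}" for k
        using mul_lip[OF lp ph conjunct2[OF R] conjunct1[OF R] True] that by blast
      have "SS (TT \<mu>) f = (\<Sum>k<n. \<mu> (mulk M (\<phi> k) f))"
        unfolding SS_def TT_def Tk_def using True by simp
      also have "\<dots> = \<mu> (\<lambda>x. \<Sum>k<n. mulk M (\<phi> k) f x)"
        using dual_sum_app[OF XL[OF mu], of "{..<n}" "\<lambda>k. mulk M (\<phi> k) f"] g by simp
      also have "(\<lambda>x. \<Sum>k<n. mulk M (\<phi> k) f x) = f"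
      proof
        fix x
        show "(\<Sum>k<n. mulk M (\<phi> k) f x) = f x"
        proof (cases "x \<in> M")
          case xM: True
          have "(\<Sum>k<n. mulk M (\<phi> k) f x) = (\<Sum>k<n. \<phi> k x) * f x"
            unfolding mulk_def using xM by (simp add: sum_distrib_right)
          then show ?thesis using assms(7)[OF xM] by simp
        next
          case False
          then show ?thesis using True unfolding mulk_def Lip0_def by simp
        qed
      qed
      finally show ?thesis .
    qed
  qed
  have F4a: "TT (fadd a b) = sadd (TT a) (TT b)" for a b
    unfolding TT_def Tk_def sadd_def fadd_def by (rule ext, rule ext) auto
  have F4b: "TT (fscale c a) = sscale c (TT a)" for c a
    unfolding TT_def Tk_def sscale_def fscale_def by (rule ext, rule ext) auto
  have F5a: "SS (sadd a b) = fadd (SS a) (SS b)" for a b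
    unfolding SS_def sadd_def fadd_def by (simp add: sum.distrib)
  have F5b: "SS (sscale c a) = fscale c (SS a)" for c a
    unfolding SS_def sscale_def fscale_def by (simp add: sum_distrib_left)
  have F6: "dsum_norm M d p n (TT \<mu>) \<le> CT * dual_norm M d p \<mu>" if mu: "\<mu> \<in> X" for \<mu>
  proof -
    have "dsum_norm M d p n (TT \<mu>) = (\<Sum>k<n. dual_norm M d p (Tk M d p (\<phi> k) \<mu>))"
      unfolding dsum_norm_def TT_def by simp
    also have "\<dots> \<le> (\<Sum>k<n. K k * dual_norm M d p \<mu>)"
      using Tk_props[OF lp ph conjunct2[OF R] conjunct1[OF R] XL[OF mu]] unfolding K_def
      by (intro sum_mono) auto
    also have "\<dots> = CT * dual_norm M d p \<mu>" unfolding CT_def by (simp add: sum_distrib_right)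
    finally show ?thesis .
  qed
  have F7: "dual_norm M d p (SS \<nu>) \<le> 1 * dsum_norm M d p n \<nu>" if nu: "\<nu> \<in> Y" for \<nu>
  proof -
    have "\<nu> k \<in> Lip0_dual M d p" if k: "k \<in> {..<n}" for k
      using nu k unfolding Y_def DSum_def Free_def by blast
    then have "dual_norm M d p (SS \<nu>) \<le> dsum_norm M d p n \<nu>"
      unfolding SS_def dsum_norm_def by (rule dual_norm_sumk[OF finite_lessThan])
    then show ?thesis by simp
  qed
  define Q where "Q y = TT (SS y)" for y
  have QY: "Q ` Y \<subseteq> Y" unfolding Q_def using F1 F2 by auto
  have b1: "bounded_linear_between Y sadd sscale (dsum_norm M d p n) Y sadd sscale (dsum_norm M d p n) Q"
    unfolding bounded_linear_between_def
  proof (intro conjI QY ballI allI exI[of _ CT])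
    fix x y assume "x \<in> Y" "y \<in> Y"
    then show "Q (sadd x y) = sadd (Q x) (Q y)" unfolding Q_def using F5a F4a by simp
  next
    fix c x assume "x \<in> Y"
    then show "Q (sscale c x) = sscale c (Q x)" unfolding Q_def using F5b F4b by simp
  next
    fix x assume x: "x \<in> Y"
    have "dsum_norm M d p n (Q x) \<le> CT * dual_norm M d p (SS x)" unfolding Q_def by (rule F6[OF F2[OF x]])
    also have "\<dots> \<le> CT * dsum_norm M d p n x" using F7[OF x] CT0 by (intro mult_left_mono) auto
    finally show "dsum_norm M d p n (Q x) \<le> CT * dsum_norm M d p n x" .
  qed
  have b2: "\<forall>y\<in>Y. Q (Q y) = Q y" unfolding Q_def using F3 F2 by simp
  have b3: "bounded_linear_between X fadd fscale (dual_norm M d p) (Q ` Y) sadd sscale (dsum_norm M d p n) TT"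
    unfolding bounded_linear_between_def
  proof (intro conjI ballI allI exI[of _ CT])
    show "TT ` X \<subseteq> Q ` Y"
    proof
      fix z assume "z \<in> TT ` X"
      then obtain \<mu> where mu: "\<mu> \<in> X" "z = TT \<mu>" by blast
      then have "z = Q (TT \<mu>)" unfolding Q_def using F3 by simp
      then show "z \<in> Q ` Y" using F1[OF mu(1)] by blast
    qed
  qed (use F4a F4b F6 in auto)
  have b4: "bounded_linear_between (Q ` Y) sadd sscale (dsum_norm M d p n) X fadd fscale (dual_norm M d p) SS"
    unfolding bounded_linear_between_def
  proof (intro conjI ballI allI exI[of _ 1])
    show "SS ` Q ` Y \<subseteq> X" using F2 QY by blast
  next
    fix x assume "x \<in> Q ` Y"
    then show "dual_norm M d p (SS x) \<le> 1 * dsum_norm M d p n x" using F7 QY by blast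
  qed (use F5a F5b in auto)
  have b5: "\<forall>x\<in>X. SS (TT x) = x" using F3 by blast
  have b6: "\<forall>z\<in>Q ` Y. TT (SS z) = z" unfolding Q_def using F3 F2 by auto
  show ?thesis unfolding Free_iso_complemented_in_sum_def Let_def X_def[symmetric] Y_def[symmetric]
    using b1 b2 b3 b4 b5 b6 by blast
qed

end
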